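(* Let $\mathcal H$ be a Hilbert space and $\mathcal S,\mathcal A\subseteq\mathcal H$ closed subspaces with $\mathcal S,\mathcal A,\mathcal S^\perp,\mathcal A^\perp$ nonzero, $\mathcal A\oplus\mathcal S^\perp=\mathcal H$, and $\sin(\mathcal A^\perp,\mathcal S)>0$. Fix $\lambda\in[0,1]$, let $B:=\lambda P_{\mathcal A\mathcal S^\perp}+(1-\lambda)P_{\mathcal S}$ and $\mathcal B:=\mathcal R(B)$. Then $$\frac{1}{1+\lambda^2\frac{\sin^2(\mathcal A,\mathcal S)}{\cos^2(\mathcal A,\mathcal S)}}\le\sin^2(\mathcal B^\perp,\mathcal S)\le\frac{1}{1+\lambda^2\frac{\cos^2(\mathcal A^\perp,\mathcal S)}{\sin^2(\mathcal A^\perp,\mathcal S)}}.$$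
   Context: $P_{\mathcal V}$ is the orthogonal projection onto a closed subspace $\mathcal V$, $\mathcal V^\perp$ its orthogonal complement, $\mathcal R(\cdot)$ the range. For closed subspaces with $\mathcal V_1\oplus\mathcal V_2=\mathcal H$, $P_{\mathcal V_1\mathcal V_2}$ is the oblique projection onto $\mathcal V_1$ along $\mathcal V_2$ (identity on $\mathcal V_1$, zero on $\mathcal V_2$). Angles between nonzero closed subspaces: $\cos(\mathcal V_1,\mathcal V_2):=\inf_{0\ne x\in\mathcal V_1}\|P_{\mathcal V_2}x\|/\|x\|$, $\sin(\mathcal V_1,\mathcal V_2):=\sup_{0\ne x\in\mathcal V_1}\|P_{\mathcal V_2^\perp}x\|/\|x\|$. *)

theory Defs
  imports "HOL-Analysis.Analysis"
begin

text \<open>Real Hilbert space: type class real_inner + complete_space.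
Closed subspace: subspace V and closed V. Orthogonal complement: orthogonal_comp (library).\<close>

definition closed_subspace :: "'a::real_normed_vector set \<Rightarrow> bool" where
  "closed_subspace V \<longleftrightarrow> subspace V \<and> closed V"

definition orth_proj :: "'a::real_inner set \<Rightarrow> 'a \<Rightarrow> 'a" where
  "orth_proj V x = (THE y. y \<in> V \<and> x - y \<in> orthogonal_comp V)"

definition direct_sum_UNIV :: "'a::real_vector set \<Rightarrow> 'a set \<Rightarrow> bool" where
  "direct_sum_UNIV V1 V2 \<longleftrightarrow> V1 \<inter> V2 = {0} \<and> (\<forall>x. \<exists>a\<in>V1. \<exists>b\<in>V2. x = a + b)"

definition obl_proj :: "'a::real_vector set \<Rightarrow> 'a set \<Rightarrow> 'a \<Rightarrow> 'a" where
  "obl_proj V1 V2 x = (THE y. y \<in> V1 \<and> x - y \<in> V2)"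

definition cos_subsp :: "'a::real_inner set \<Rightarrow> 'a set \<Rightarrow> real" where
  "cos_subsp V1 V2 = (INF x\<in>V1 - {0}. norm (orth_proj V2 x) / norm x)"

definition sin_subsp :: "'a::real_inner set \<Rightarrow> 'a set \<Rightarrow> real" where
  "sin_subsp V1 V2 = (SUP x\<in>V1 - {0}. norm (orth_proj (orthogonal_comp V2) x) / norm x)"

end

theory Submission
  imports Defs
begin


lemma oc_iff: "x \<in> orthogonal_comp V \<longleftrightarrow> (\<forall>v\<in>V. inner v x = 0)"
  by (simp add: orthogonal_comp_def orthogonal_def)

lemma closed_oc: "closed (orthogonal_comp (V::'a::real_inner set))"
proof -
  have "orthogonal_comp V = (\<Inter>v\<in>V. {x. inner v x = 0})" by (auto simp: oc_iff)
  then show ?thesis by (auto intro!: closed_INT closed_hyperplane)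
qed

lemma closed_subspace_oc: "closed_subspace (orthogonal_comp (V::'a::real_inner set))"
  by (simp add: closed_subspace_def closed_oc subspace_orthogonal_comp)

lemma orth_proj_eq:
  assumes "subspace V" "y \<in> V" "x - y \<in> orthogonal_comp V"
  shows "orth_proj V x = y"
  unfolding orth_proj_def
proof (rule the_equality)
  show "y \<in> V \<and> x - y \<in> orthogonal_comp V" using assms by auto
  fix z assume z: "z \<in> V \<and> x - z \<in> orthogonal_comp V"
  have "z - y \<in> V" using assms z by (simp add: subspace_diff)
  moreover have "z - y \<in> orthogonal_comp V"
  proof -
    have "(x - y) - (x - z) \<in> orthogonal_comp V"
      using assms z subspace_orthogonal_comp by (blast intro: subspace_diff)
    then show ?thesis by simp
  qed
  ultimately have "inner (z - y) (z - y) = 0" by (simp add: oc_iff)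
  then show "z = y" by simp
qed

lemma parallelogram: "norm (a - b)^2 + norm (a + b)^2 = 2*norm a^2 + 2*norm (b::'a::real_inner)^2"
  by (simp add: power2_norm_eq_inner inner_diff inner_add inner_commute algebra_simps)

lemma orth_proj_exists:
  fixes V :: "'a::{real_inner,complete_space} set"
  assumes cs: "closed_subspace V"
  shows "\<exists>y\<in>V. x - y \<in> orthogonal_comp V"
proof -
  have sV: "subspace V" and cV: "closed V" using cs by (auto simp: closed_subspace_def)
  have ne: "V \<noteq> {}" using sV subspace_0 by blast
  define d where "d = infdist x V"
  have d0: "0 \<le> d" by (simp add: d_def infdist_nonneg)
  have dle: "d \<le> norm (x - v)" if "v \<in> V" for v
    using infdist_le[OF that, of x] by (simp add: d_def dist_norm)
  have "\<exists>y\<in>V. norm (x - y) < sqrt (d^2 + 1/(Suc n))" for n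
  proof -
    have "d < sqrt (d^2 + 1/(Suc n))"
      by (intro real_less_rsqrt) simp
    then have "Inf ((\<lambda>a. dist x a) ` V) < sqrt (d^2 + 1/(Suc n))"
      using ne by (simp add: d_def infdist_notempty)
    moreover have "(\<lambda>a. dist x a) ` V \<noteq> {}" using ne by simp
    ultimately obtain z where "z \<in> (\<lambda>a. dist x a) ` V" "z < sqrt (d^2 + 1/(Suc n))"
      using cInf_lessD by metis
    then obtain a where "a \<in> V" "dist x a < sqrt (d^2 + 1/(Suc n))" by (auto simp del: dist_norm)
    then show ?thesis by (auto simp: dist_norm)
  qed
  then obtain y where yV: "\<And>n. y n \<in> V" and yd: "\<And>n. norm (x - y n) < sqrt (d^2 + 1/(Suc n))"
    by metis
  have yd2: "norm (x - y n)^2 \<le> d^2 + 1/(Suc n)" for n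
  proof -
    have "norm (x - y n)^2 \<le> (sqrt (d^2 + 1/(Suc n)))^2"
      using yd[of n] by (intro power_mono) auto
    also have "\<dots> = d^2 + 1/(Suc n)" by (simp add: add_nonneg_nonneg)
    finally show ?thesis .
  qed
  have Ca: "Cauchy y"
  proof (rule metric_CauchyI)
    fix e :: real assume e: "e > 0"
    obtain N where N: "1 / real (Suc N) < e^2/4"
      using e by (metis divide_pos_pos nat_approx_posE zero_less_numeral zero_less_power)
    have "dist (y m) (y n) < e" if "m \<ge> N" "n \<ge> N" for m n
    proof -
      have mid: "(1/2) *\<^sub>R (y m + y n) \<in> V"
        using sV yV by (simp add: subspace_add subspace_scale)
      have "2*d \<le> 2*norm (x - (1/2) *\<^sub>R (y m + y n))" using dle[OF mid] by simp
      also have "\<dots> = norm ((x - y m) + (x - y n))"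
      proof -
        have "(x - y m) + (x - y n) = 2 *\<^sub>R (x - (1/2) *\<^sub>R (y m + y n))"
          by (simp add: algebra_simps scaleR_2)
        then show ?thesis by simp
      qed
      finally have h1: "(2*d)^2 \<le> norm ((x - y m) + (x - y n))^2"
        using d0 by (intro power_mono) auto
      have par: "norm ((x - y m) - (x - y n))^2 + norm ((x - y m) + (x - y n))^2
          = 2*norm (x - y m)^2 + 2*norm (x - y n)^2" by (rule parallelogram)
      have "1/real (Suc m) \<le> 1/real (Suc N)" "1/real (Suc n) \<le> 1/real (Suc N)"
        using that by (auto simp: divide_simps)
      then have "norm (y n - y m)^2 < e^2"
        using par h1 yd2[of m] yd2[of n] N by (simp add: power_mult_distrib algebra_simps)
      then have "norm (y n - y m) < e" using e by (simp add: power_less_imp_less_base)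
      then show ?thesis by (simp add: dist_norm norm_minus_commute)
    qed
    then show "\<exists>M. \<forall>m\<ge>M. \<forall>n\<ge>M. dist (y m) (y n) < e" by blast
  qed
  then obtain z where lim: "y \<longlonglongrightarrow> z" using Cauchy_convergent_iff convergent_def by blast
  have zV: "z \<in> V" using cV yV lim closed_sequentially by blast
  have "(\<lambda>n. norm (x - y n)^2) \<longlonglongrightarrow> norm (x - z)^2"
    by (intro tendsto_intros lim)
  moreover have "(\<lambda>n. d^2 + 1/real (Suc n)) \<longlonglongrightarrow> d^2 + 0"
    by (intro tendsto_intros LIMSEQ_inverse_real_of_nat[unfolded inverse_eq_divide])
  ultimately have zd: "norm (x - z)^2 \<le> d^2"
    using yd2 by (intro LIMSEQ_le) auto
  have "inner v (x - z) = 0" if vV: "v \<in> V" for v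
  proof (cases "v = 0")
    case False
    define c where "c = inner (x - z) v"
    define t where "t = c / (inner v v)"
    have vv: "inner v v > 0" using False by simp
    have "z + t *\<^sub>R v \<in> V" using sV zV vV by (simp add: subspace_add subspace_scale)
    then have "d \<le> norm (x - (z + t *\<^sub>R v))" by (rule dle)
    moreover have "x - (z + t *\<^sub>R v) = (x - z) - t *\<^sub>R v" by (simp add: algebra_simps)
    ultimately have "d^2 \<le> norm ((x - z) - t *\<^sub>R v)^2" using d0 by (metis power_mono)
    also have "norm ((x - z) - t *\<^sub>R v)^2 = norm (x - z)^2 - 2*t*c + t^2 * inner v v"
      unfolding power2_norm_eq_inner c_def
      by (simp add: inner_diff_left inner_diff_right inner_commute power2_eq_square algebra_simps)
    finally have "0 \<le> - 2*t*c + t^2 * inner v v" using zd by simp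
    also have "\<dots> = -((c^2) / inner v v)" using vv by (simp add: t_def power2_eq_square field_simps)
    finally have h: "c^2 / inner v v \<le> 0" by simp
    have "c^2 \<le> 0"
    proof (rule ccontr)
      assume "\<not> c^2 \<le> 0"
      then have "c^2 / inner v v > 0" using vv by simp
      with h show False by simp
    qed
    then have "c = 0" by simp
    then show ?thesis by (simp add: c_def inner_commute)
  qed simp
  then show ?thesis using zV by (auto simp: oc_iff)
qed


lemma pyth2: "inner p q = 0 \<Longrightarrow> norm (p + q)^2 = norm p ^2 + norm (q::'a::real_inner)^2"
  by (simp add: power2_norm_eq_inner inner_add_left inner_add_right inner_commute)

context
  fixes V :: "'a::{real_inner,complete_space} set"
  assumes cs: "closed_subspace V"
begin

lemma sV: "subspace V" using cs by (simp add: closed_subspace_def)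

lemma op_in: "orth_proj V x \<in> V" and op_orth: "x - orth_proj V x \<in> orthogonal_comp V"
proof -
  obtain y where "y \<in> V" "x - y \<in> orthogonal_comp V" using orth_proj_exists[OF cs] by blast
  moreover then have "orth_proj V x = y" using orth_proj_eq[OF sV] by blast
  ultimately show "orth_proj V x \<in> V" "x - orth_proj V x \<in> orthogonal_comp V" by auto
qed

lemma op_inner: "v \<in> V \<Longrightarrow> inner v x = inner v (orth_proj V x)"
proof -
  assume "v \<in> V"
  then have "inner v (x - orth_proj V x) = 0" using op_orth[of x] by (simp add: oc_iff)
  then show ?thesis by (simp add: inner_diff_right)
qed

lemma op_id: "v \<in> V \<Longrightarrow> orth_proj V v = v"
  by (rule orth_proj_eq[OF sV]) (auto simp: oc_iff)

lemma op_add: "orth_proj V (x + y) = orth_proj V x + orth_proj V y"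
proof (rule orth_proj_eq[OF sV])
  show "orth_proj V x + orth_proj V y \<in> V" using op_in sV by (simp add: subspace_add)
  have "(x - orth_proj V x) + (y - orth_proj V y) \<in> orthogonal_comp V"
    using op_orth subspace_orthogonal_comp by (blast intro: subspace_add)
  then show "x + y - (orth_proj V x + orth_proj V y) \<in> orthogonal_comp V" by (simp add: algebra_simps)
qed

lemma op_scale: "orth_proj V (c *\<^sub>R x) = c *\<^sub>R orth_proj V x"
proof (rule orth_proj_eq[OF sV])
  show "c *\<^sub>R orth_proj V x \<in> V" using op_in sV by (simp add: subspace_scale)
  have "c *\<^sub>R (x - orth_proj V x) \<in> orthogonal_comp V"
    using op_orth subspace_orthogonal_comp by (blast intro: subspace_scale)
  then show "c *\<^sub>R x - c *\<^sub>R orth_proj V x \<in> orthogonal_comp V" by (simp add: algebra_simps)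
qed

lemma op_diff: "orth_proj V (x - y) = orth_proj V x - orth_proj V y"
  using op_add[of x "-y"] op_scale[of "-1" y] by simp

lemma op_minus: "orth_proj V (- x) = - orth_proj V x"
  using op_scale[of "-1" x] by simp

lemma op_zero: "orth_proj V 0 = 0"
  using op_scale[of 0 0] by simp

lemma op_pyth: "norm x ^2 = norm (orth_proj V x)^2 + norm (x - orth_proj V x)^2"
proof -
  have o: "inner (orth_proj V x) (x - orth_proj V x) = 0"
    using op_in op_orth by (simp add: oc_iff)
  show ?thesis using pyth2[OF o] by simp
qed

lemma op_le: "norm (orth_proj V x) \<le> norm x" and op_le2: "norm (x - orth_proj V x) \<le> norm x"
proof -
  have "norm (orth_proj V x)^2 \<le> norm x ^2" "norm (x - orth_proj V x)^2 \<le> norm x ^2"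
    using op_pyth[of x] by auto
  then show "norm (orth_proj V x) \<le> norm x" "norm (x - orth_proj V x) \<le> norm x"
    by (auto simp: power2_le_iff_abs_le)
qed

lemma op_comp: "orth_proj (orthogonal_comp V) x = x - orth_proj V x"
proof (rule orth_proj_eq[OF subspace_orthogonal_comp])
  show "x - orth_proj V x \<in> orthogonal_comp V" by (rule op_orth)
  have "orth_proj V x \<in> orthogonal_comp (orthogonal_comp V)"
    using op_in orthogonal_comp_subset by blast
  then show "x - (x - orth_proj V x) \<in> orthogonal_comp (orthogonal_comp V)" by simp
qed

lemma op_bl: "bounded_linear (orth_proj V)"
  by (rule bounded_linear_intro[of _ 1]) (auto simp: op_add op_scale op_le)

end


lemma baire_part:
  fixes S A :: "'a::{real_inner,complete_space} set"
  assumes cS: "closed_subspace S" and cA: "closed_subspace A"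
    and surj: "\<And>s. s \<in> S \<Longrightarrow> \<exists>a\<in>A. orth_proj S a = s"
    and dis: "A \<inter> orthogonal_comp S = {0}"
  shows "\<exists>c>0. \<forall>a\<in>A. c * norm a \<le> norm (orth_proj S a)"
proof -
  have sS: "subspace S" and clS: "closed S" using cS by (auto simp: closed_subspace_def)
  have sA: "subspace A" using cA by (auto simp: closed_subspace_def)
  define K where "K n = {s\<in>S. \<forall>u\<in>S. inner u s \<le> real n * norm (orth_proj A u)}" for n :: nat
  have Kcl: "closedin (top_of_set S) (K n)" for n
  proof -
    have "K n = S \<inter> (\<Inter>u\<in>S. {s. inner u s \<le> real n * norm (orth_proj A u)})"
      by (auto simp: K_def)
    moreover have "closed (\<Inter>u\<in>S. {s. inner u s \<le> real n * norm (orth_proj A u)})"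
      by (auto intro!: closed_INT closed_halfspace_le)
    ultimately show ?thesis by (simp add: closedin_closed_Int)
  qed
  have Kun: "\<Union>(range K) = S"
  proof
    show "\<Union>(range K) \<subseteq> S" by (auto simp: K_def)
    show "S \<subseteq> \<Union>(range K)"
    proof
      fix s assume sS': "s \<in> S"
      obtain a where aA: "a \<in> A" and as: "orth_proj S a = s" using surj[OF sS'] by blast
      obtain n where n: "norm a \<le> real n" using real_arch_simple by blast
      have "inner u s \<le> real n * norm (orth_proj A u)" if uS: "u \<in> S" for u
      proof -
        have "inner u s = inner u a" using op_inner[OF cS uS, of a] as by simp
        also have "\<dots> = inner a u" by (simp add: inner_commute)
        also have "\<dots> = inner a (orth_proj A u)" by (rule op_inner[OF cA aA])
        also have "\<dots> \<le> norm a * norm (orth_proj A u)" by (rule norm_cauchy_schwarz)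
        also have "\<dots> \<le> real n * norm (orth_proj A u)" using n by (simp add: mult_right_mono)
        finally show ?thesis .
      qed
      then have "s \<in> K n" using sS' by (simp add: K_def)
      then show "s \<in> \<Union>(range K)" by blast
    qed
  qed
  have "\<exists>n. (top_of_set S) interior_of (K n) \<noteq> {}"
  proof (rule ccontr)
    assume "\<not> ?thesis"
    then have h: "\<And>T. T \<in> range K \<Longrightarrow> closedin (top_of_set S) T \<and> (top_of_set S) interior_of T = {}"
      using Kcl by auto
    have "closedin euclidean S" using clS by (simp only: closed_closedin)
    then have cm: "completely_metrizable_space (top_of_set S)"
      by (rule completely_metrizable_space_closedin[OF completely_metrizable_space_euclidean])
    have "(top_of_set S) interior_of \<Union>(range K) = {}"
    proof (rule Baire_category_alt)
      show "completely_metrizable_space (top_of_set S) \<or> locally_compact_space (top_of_set S) \<and> regular_space (top_of_set S)"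
        using cm by (rule disjI1)
      show "countable (range K)" by simp
      fix T assume "T \<in> range K"
      then show "closedin (top_of_set S) T \<and> (top_of_set S) interior_of T = {}" by (rule h)
    qed
    moreover have "(top_of_set S) interior_of S = S"
      using interior_of_topspace[of "top_of_set S"] by simp
    ultimately have "S = {}" using Kun by simp
    then show False using sS subspace_0 by blast
  qed
  then obtain n z where z: "z \<in> (top_of_set S) interior_of (K n)" by blast
  then obtain U where U: "openin (top_of_set S) U" "z \<in> U" "U \<subseteq> K n"
    by (auto simp: interior_of_def)
  then obtain W0 where O: "open W0" "U = S \<inter> W0" by (auto simp: openin_open)
  then obtain e where e: "e > 0" "ball z e \<subseteq> W0" using U open_contains_ball by blast
  have zS: "z \<in> S" using U O by auto
  have inK: "s \<in> K n" if "s \<in> S" "dist z s < e" for s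
    using that e O U by auto
  have key: "inner u s \<le> real n * norm (orth_proj A u)" if sS': "s \<in> S" "norm s < e" and uS: "u \<in> S" for s u
  proof -
    have "z + s \<in> K n" using inK[of "z + s"] zS sS' sS by (simp add: subspace_add dist_norm)
    then have h1: "inner u (z + s) \<le> real n * norm (orth_proj A u)" using uS by (simp add: K_def)
    have "z - s \<in> K n" using inK[of "z - s"] zS sS' sS by (simp add: subspace_diff dist_norm)
    moreover have "- u \<in> S" using uS sS by (simp add: subspace_neg)
    ultimately have h2: "inner (-u) (z - s) \<le> real n * norm (orth_proj A (-u))" unfolding K_def by blast
    have "norm (orth_proj A (-u)) = norm (orth_proj A u)" by (simp add: op_minus[OF cA])
    then show ?thesis using h1 h2 by (simp add: inner_add_right inner_diff_right)
  qed
  define c where "c = e / (2 * (real n + 1))"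
  have c0: "c > 0" using e by (simp add: c_def)
  have lowA: "c * norm u \<le> norm (orth_proj A u)" if uS: "u \<in> S" for u
  proof (cases "u = 0")
    case False
    define s where "s = (e / 2 / norm u) *\<^sub>R u"
    have sS': "s \<in> S" using uS sS by (simp add: s_def subspace_scale)
    have ns: "norm s = e / 2" using False e by (simp add: s_def)
    have "inner u s = e / 2 * norm u"
      using False by (simp add: s_def power2_norm_eq_inner[symmetric] power2_eq_square)
    then have "e / 2 * norm u \<le> real n * norm (orth_proj A u)"
      using key[OF sS' _ uS] ns e by simp
    also have "\<dots> \<le> (real n + 1) * norm (orth_proj A u)" by (simp add: mult_right_mono)
    finally have "e / 2 * norm u \<le> (real n + 1) * norm (orth_proj A u)" .
    then show ?thesis by (simp add: c_def field_simps)
  qed (simp add: op_zero[OF cA])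
  define Rg where "Rg = orth_proj A ` S"
  have blA: "bounded_linear (orth_proj A)" by (rule op_bl[OF cA])
  have RgA: "Rg \<subseteq> A" using op_in[OF cA] by (auto simp: Rg_def)
  have sRg: "subspace Rg"
    unfolding Rg_def subspace_def
  proof (intro conjI ballI allI)
    show "0 \<in> orth_proj A ` S" using sS subspace_0 op_zero[OF cA] by (metis image_eqI)
  next
    fix x y assume "x \<in> orth_proj A ` S" "y \<in> orth_proj A ` S"
    then obtain s t where "s \<in> S" "t \<in> S" "x = orth_proj A s" "y = orth_proj A t" by blast
    then show "x + y \<in> orth_proj A ` S"
      using op_add[OF cA, of s t] sS by (metis image_eqI subspace_add)
  next
    fix r :: real and x assume "x \<in> orth_proj A ` S"
    then obtain s where "s \<in> S" "x = orth_proj A s" by blast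
    then show "r *\<^sub>R x \<in> orth_proj A ` S"
      using op_scale[OF cA, of r s] sS by (metis image_eqI subspace_scale)
  qed
  have clRg: "closed Rg"
    unfolding closed_sequential_limits
  proof (intro allI impI)
    fix x l assume h: "(\<forall>k. x k \<in> Rg) \<and> x \<longlonglongrightarrow> l"
    then have "\<forall>k. \<exists>s\<in>S. x k = orth_proj A s" by (auto simp: Rg_def)
    then obtain s where sk: "\<And>k. s k \<in> S" "\<And>k. x k = orth_proj A (s k)" by metis
    have Cx: "Cauchy x" using h LIMSEQ_imp_Cauchy by blast
    have "Cauchy s"
    proof (rule metric_CauchyI)
      fix r :: real assume r: "r > 0"
      then obtain M where M: "\<forall>m\<ge>M. \<forall>k\<ge>M. dist (x m) (x k) < c * r"
        using Cx c0 unfolding Cauchy_def by (meson mult_pos_pos)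
      have "dist (s m) (s k) < r" if "m \<ge> M" "k \<ge> M" for m k
      proof -
        have "s m - s k \<in> S" using sk sS by (simp add: subspace_diff)
        then have "c * norm (s m - s k) \<le> norm (orth_proj A (s m - s k))" by (rule lowA)
        also have "\<dots> = dist (x m) (x k)" using sk by (simp add: op_diff[OF cA] dist_norm)
        also have "\<dots> < c * r" using M that by blast
        finally show ?thesis using c0 by (simp add: dist_norm)
      qed
      then show "\<exists>M. \<forall>m\<ge>M. \<forall>n\<ge>M. dist (s m) (s n) < r" by blast
    qed
    then obtain t where st: "s \<longlonglongrightarrow> t" using Cauchy_convergent_iff convergent_def by blast
    have tS: "t \<in> S" using clS sk st closed_sequentially by blast
    have "(\<lambda>k. orth_proj A (s k)) \<longlonglongrightarrow> orth_proj A t" by (rule bounded_linear.tendsto[OF blA st])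
    moreover have "x = (\<lambda>k. orth_proj A (s k))" using sk by (intro ext) simp
    ultimately have "x \<longlonglongrightarrow> orth_proj A t" by simp
    then have "l = orth_proj A t" using h LIMSEQ_unique by blast
    then show "l \<in> Rg" using tS by (simp add: Rg_def)
  qed
  have cRg: "closed_subspace Rg" using sRg clRg by (simp add: closed_subspace_def)
  show ?thesis
  proof (intro exI conjI ballI)
    show "c > 0" by (rule c0)
    fix a assume aA: "a \<in> A"
    define e' where "e' = a - orth_proj Rg a"
    have e'A: "e' \<in> A" using aA RgA op_in[OF cRg] sA by (auto simp: e'_def intro: subspace_diff)
    have e'o: "e' \<in> orthogonal_comp Rg" using op_orth[OF cRg] by (simp add: e'_def)
    have "e' \<in> orthogonal_comp S"
      unfolding oc_iff
    proof
      fix s assume sS': "s \<in> S"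
      have "inner e' s = inner e' (orth_proj A s)" by (rule op_inner[OF cA e'A])
      also have "\<dots> = 0" using e'o sS' by (auto simp: oc_iff Rg_def inner_commute)
      finally show "inner s e' = 0" by (simp add: inner_commute)
    qed
    then have "e' = 0" using e'A dis by blast
    then have "a \<in> Rg" using op_in[OF cRg, of a] by (simp add: e'_def)
    then obtain s where sS': "s \<in> S" and as: "a = orth_proj A s" by (auto simp: Rg_def)
    have ns: "c * norm s \<le> norm a" using lowA[OF sS'] as by simp
    have "norm a ^ 2 = inner a a" by (simp add: power2_norm_eq_inner)
    also have "\<dots> = inner a s" using op_inner[OF cA aA, of s] as by simp
    also have "\<dots> = inner s (orth_proj S a)" using op_inner[OF cS sS', of a] by (simp add: inner_commute)
    also have "\<dots> \<le> norm s * norm (orth_proj S a)" by (rule norm_cauchy_schwarz)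
    finally have h: "norm a ^ 2 \<le> norm s * norm (orth_proj S a)" .
    have "c * norm a ^ 2 \<le> c * norm s * norm (orth_proj S a)" using h c0 by (simp add: mult_left_mono)
    also have "\<dots> \<le> norm a * norm (orth_proj S a)" using ns by (simp add: mult_right_mono)
    finally have "c * norm a * norm a \<le> norm (orth_proj S a) * norm a" by (simp add: power2_eq_square algebra_simps)
    then show "c * norm a \<le> norm (orth_proj S a)"
      by (cases "a = 0") (auto simp: op_zero[OF cS])
  qed
qed




lemma ratio_bounds: "norm (p::'a::real_normed_vector) \<le> norm y \<Longrightarrow> 0 \<le> norm p / norm y \<and> norm p / norm y \<le> 1"
  by (cases "y = 0") (auto simp: divide_le_eq_1)

theorem mainTheorem7:
  fixes S A :: "'a::{real_inner, complete_space} set" and lam :: real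
  assumes "closed_subspace S" and "closed_subspace A"
    and "S \<noteq> {0}" and "A \<noteq> {0}"
    and "orthogonal_comp S \<noteq> {0}" and "orthogonal_comp A \<noteq> {0}"
    and "direct_sum_UNIV A (orthogonal_comp S)"
    and "sin_subsp (orthogonal_comp A) S > 0"
    and "0 \<le> lam" and "lam \<le> 1"
  defines "B \<equiv> (\<lambda>x. lam *\<^sub>R obl_proj A (orthogonal_comp S) x + (1 - lam) *\<^sub>R orth_proj S x)"
  shows "1 / (1 + lam\<^sup>2 * ((sin_subsp A S)\<^sup>2 / (cos_subsp A S)\<^sup>2))
           \<le> (sin_subsp (orthogonal_comp (range B)) S)\<^sup>2
     \<and> (sin_subsp (orthogonal_comp (range B)) S)\<^sup>2
           \<le> 1 / (1 + lam\<^sup>2 * ((cos_subsp (orthogonal_comp A) S)\<^sup>2 / (sin_subsp (orthogonal_comp A) S)\<^sup>2))"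
proof -
  note cS = assms(1) and cA = assms(2)
  define W where "W = orthogonal_comp S"
  define Q where "Q = obl_proj A W"
  have sS: "subspace S" using cS by (simp add: closed_subspace_def)
  have sA: "subspace A" using cA by (simp add: closed_subspace_def)
  have sW: "subspace W" by (simp add: W_def subspace_orthogonal_comp)
  have dis: "A \<inter> W = {0}" and dsum: "\<And>x. \<exists>a\<in>A. \<exists>b\<in>W. x = a + b"
    using assms(7) by (auto simp: direct_sum_UNIV_def W_def)
  have obl_eq: "Q x = a" if "a \<in> A" "x - a \<in> W" for x a
    unfolding Q_def obl_proj_def
  proof (rule the_equality)
    show "a \<in> A \<and> x - a \<in> W" using that by simp
    fix z assume z: "z \<in> A \<and> x - z \<in> W"
    have "z - a \<in> A" using z that sA by (simp add: subspace_diff)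
    moreover have "(x - a) - (x - z) \<in> W" using subspace_diff[OF sW, of "x - a" "x - z"] z that by blast
    ultimately have "z - a \<in> A \<inter> W" by simp
    then show "z = a" using dis by auto
  qed
  have Qin: "Q x \<in> A" and Qorth: "x - Q x \<in> W" for x
  proof -
    obtain a b where "a \<in> A" "b \<in> W" "x = a + b" using dsum by blast
    then have "Q x = a" by (intro obl_eq) auto
    then show "Q x \<in> A" "x - Q x \<in> W" using \<open>a \<in> A\<close> \<open>b \<in> W\<close> \<open>x = a + b\<close> by auto
  qed
  have PW: "x - orth_proj S x \<in> W" for x using op_orth[OF cS] by (simp add: W_def)
  have QP: "Q (orth_proj S x) = Q x" for x
  proof (rule obl_eq[OF Qin])
    have "(x - Q x) - (x - orth_proj S x) \<in> W" by (rule subspace_diff[OF sW Qorth PW])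
    then show "orth_proj S x - Q x \<in> W" by simp
  qed
  have Tin: "Q s - s \<in> W" for s
  proof -
    have "- (s - Q s) \<in> W" by (rule subspace_neg[OF sW Qorth])
    then show ?thesis by simp
  qed
  have PQ: "orth_proj S (Q s) = s" if "s \<in> S" for s
  proof (rule orth_proj_eq[OF sS that])
    show "Q s - s \<in> orthogonal_comp S" using Tin by (simp add: W_def)
  qed
  have QA: "Q a = a" if "a \<in> A" for a using obl_eq[OF that] sW subspace_0 by force
  have dec: "orth_proj S (w + u) = w" if "w \<in> S" "u \<in> W" for w u
    by (rule orth_proj_eq[OF sS that(1)]) (use that in \<open>simp add: W_def\<close>)
  have SW0: "inner s u = 0" if "s \<in> S" "u \<in> W" for s u
    using that by (simp add: W_def oc_iff)
  have ipf: "inner (s + c *\<^sub>R (Q s - s)) (w + u) = inner s w + c * inner (Q s - s) u"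
    if "s \<in> S" "w \<in> S" "u \<in> W" for s w u c
  proof -
    have "inner s u = 0" using SW0 that by blast
    moreover have "inner (Q s - s) w = 0" using SW0[OF that(2) Tin[of s]] by (simp add: inner_commute)
    ultimately show ?thesis by (simp add: inner_add_left inner_add_right algebra_simps)
  qed
  have yd: "y = orth_proj S y + (y - orth_proj S y)" for y by simp
  have PyS: "orth_proj S y \<in> S" for y by (rule op_in[OF cS])
  define G where "G c w u \<longleftrightarrow> (\<forall>s\<in>S. inner s w + c * inner (Q s - s) u = 0)" for c w u
  have Aperp: "y \<in> orthogonal_comp A \<longleftrightarrow> G 1 (orth_proj S y) (y - orth_proj S y)" for y
  proof -
    have "y \<in> orthogonal_comp A \<longleftrightarrow> (\<forall>s\<in>S. inner (Q s) y = 0)"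
    proof
      assume "y \<in> orthogonal_comp A" then show "\<forall>s\<in>S. inner (Q s) y = 0" using Qin by (simp add: oc_iff)
    next
      assume h: "\<forall>s\<in>S. inner (Q s) y = 0"
      show "y \<in> orthogonal_comp A" unfolding oc_iff
      proof
        fix a assume "a \<in> A"
        then have "Q (orth_proj S a) = a" using QP QA by simp
        then show "inner a y = 0" using h PyS by metis
      qed
    qed
    also have "\<dots> \<longleftrightarrow> G 1 (orth_proj S y) (y - orth_proj S y)"
    proof -
      have "inner (Q s) y = inner s (orth_proj S y) + 1 * inner (Q s - s) (y - orth_proj S y)" if "s \<in> S" for s
        using ipf[of s "orth_proj S y" "y - orth_proj S y" 1] that PyS[of y] PW[of y] by simp
      then show ?thesis by (simp add: G_def)
    qed
    finally show ?thesis .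
  qed
  have Bx: "B x = orth_proj S x + lam *\<^sub>R (Q (orth_proj S x) - orth_proj S x)" for x
    by (simp add: B_def QP Q_def[symmetric] W_def[symmetric] algebra_simps)
  have Bperp: "y \<in> orthogonal_comp (range B) \<longleftrightarrow> G lam (orth_proj S y) (y - orth_proj S y)" for y
  proof -
    have "y \<in> orthogonal_comp (range B) \<longleftrightarrow> (\<forall>s\<in>S. inner (s + lam *\<^sub>R (Q s - s)) y = 0)"
    proof
      assume h: "y \<in> orthogonal_comp (range B)"
      show "\<forall>s\<in>S. inner (s + lam *\<^sub>R (Q s - s)) y = 0"
      proof
        fix s assume "s \<in> S"
        then have "B s = s + lam *\<^sub>R (Q s - s)" using Bx[of s] op_id[OF cS] by simp
        then show "inner (s + lam *\<^sub>R (Q s - s)) y = 0" using h by (metis oc_iff rangeI)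
      qed
    next
      assume h: "\<forall>s\<in>S. inner (s + lam *\<^sub>R (Q s - s)) y = 0"
      show "y \<in> orthogonal_comp (range B)" unfolding oc_iff
      proof
        fix v assume "v \<in> range B"
        then obtain x where "v = B x" by blast
        then show "inner v y = 0" using h Bx[of x] PyS[of x] by simp
      qed
    qed
    also have "\<dots> \<longleftrightarrow> G lam (orth_proj S y) (y - orth_proj S y)"
    proof -
      have "inner (s + lam *\<^sub>R (Q s - s)) y = inner s (orth_proj S y) + lam * inner (Q s - s) (y - orth_proj S y)" if "s \<in> S" for s
        using ipf[of s "orth_proj S y" "y - orth_proj S y" lam] that PyS[of y] PW[of y] by simp
      then show ?thesis by (simp add: G_def)
    qed
    finally show ?thesis .
  qed
  have compS: "orth_proj (orthogonal_comp S) y = y - orth_proj S y" for y by (rule op_comp[OF cS])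
  have dec2: "(w + u) - orth_proj S (w + u) = u" if "w \<in> S" "u \<in> W" for w u
    using dec[OF that] by simp
  define f where "f y = norm (y - orth_proj S y) / norm y" for y
  define g where "g y = norm (orth_proj S y) / norm y" for y
  have f01: "0 \<le> f y" "f y \<le> 1" for y using ratio_bounds[OF op_le2[OF cS]] by (auto simp: f_def)
  have g01: "0 \<le> g y" "g y \<le> 1" for y using ratio_bounds[OF op_le[OF cS]] by (auto simp: g_def)
  have fg: "(f y)^2 + (g y)^2 = 1" if "y \<noteq> 0" for y
  proof -
    have "(f y)^2 + (g y)^2 = (norm (orth_proj S y)^2 + norm (y - orth_proj S y)^2) / (norm y)^2"
      by (simp add: f_def g_def power_divide add_divide_distrib)
    also have "\<dots> = 1" using op_pyth[OF cS, of y] that by simp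
    finally show ?thesis .
  qed
  define DA where "DA = orthogonal_comp A - {0}"
  define DB where "DB = orthogonal_comp (range B) - {0}"
  have sPdef: "sin_subsp (orthogonal_comp A) S = (SUP y\<in>DA. f y)"
    by (simp add: sin_subsp_def DA_def f_def compS)
  have cPdef: "cos_subsp (orthogonal_comp A) S = (INF y\<in>DA. g y)"
    by (simp add: cos_subsp_def DA_def g_def)
  have sBdef: "sin_subsp (orthogonal_comp (range B)) S = (SUP y\<in>DB. f y)"
    by (simp add: sin_subsp_def DB_def f_def compS)
  have sASdef: "sin_subsp A S = (SUP y\<in>A - {0}. f y)"
    by (simp add: sin_subsp_def f_def compS)
  have cASdef: "cos_subsp A S = (INF y\<in>A - {0}. g y)"
    by (simp add: cos_subsp_def g_def)
  have bdf: "bdd_above (f ` X)" for X by (rule bdd_aboveI[of _ 1]) (auto simp: f01)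
  have bdg: "bdd_below (g ` X)" for X by (rule bdd_belowI[of _ 0]) (auto simp: g01)
  have Nz: "y - orth_proj S y \<noteq> 0" if "y \<in> orthogonal_comp A" "y \<noteq> 0" for y
  proof
    assume u0: "y - orth_proj S y = 0"
    have "G 1 (orth_proj S y) (y - orth_proj S y)" using Aperp that by blast
    then have "inner (orth_proj S y) (orth_proj S y) = 0" using u0 PyS[of y] by (simp add: G_def)
    then have "orth_proj S y = 0" by simp
    then show False using u0 that by simp
  qed
  have mapAB: "lam *\<^sub>R orth_proj S y + (y - orth_proj S y) \<in> orthogonal_comp (range B)"
    if "y \<in> orthogonal_comp A" for y
  proof -
    have wS: "lam *\<^sub>R orth_proj S y \<in> S" using PyS sS by (simp add: subspace_scale)
    have G1: "G 1 (orth_proj S y) (y - orth_proj S y)" using Aperp that by blast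
    have "G lam (lam *\<^sub>R orth_proj S y) (y - orth_proj S y)"
      unfolding G_def
    proof
      fix s assume "s \<in> S"
      then have "inner s (orth_proj S y) + 1 * inner (Q s - s) (y - orth_proj S y) = 0" using G1 by (simp add: G_def)
      then have "lam * (inner s (orth_proj S y) + inner (Q s - s) (y - orth_proj S y)) = 0" by simp
      then show "inner s (lam *\<^sub>R orth_proj S y) + lam * inner (Q s - s) (y - orth_proj S y) = 0"
        by (simp add: algebra_simps)
    qed
    then show ?thesis using Bperp dec[OF wS PW] dec2[OF wS PW] by simp
  qed
  have ny': "norm (lam *\<^sub>R orth_proj S y + (y - orth_proj S y))^2 = lam^2 * norm (orth_proj S y)^2 + norm (y - orth_proj S y)^2" for y
  proof -
    have "inner (lam *\<^sub>R orth_proj S y) (y - orth_proj S y) = 0"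
      using SW0[OF PyS PW] by simp
    from pyth2[OF this] show ?thesis by (simp add: power_mult_distrib)
  qed
  have fy': "f (lam *\<^sub>R orth_proj S y + (y - orth_proj S y)) = norm (y - orth_proj S y) / norm (lam *\<^sub>R orth_proj S y + (y - orth_proj S y))" for y
  proof -
    have wS: "lam *\<^sub>R orth_proj S y \<in> S" using PyS sS by (simp add: subspace_scale)
    show ?thesis using dec2[OF wS PW] by (simp add: f_def)
  qed
  obtain y0 where y0: "y0 \<in> orthogonal_comp A" "y0 \<noteq> 0"
    using assms(6) subspace_0[OF subspace_orthogonal_comp[of A]] by blast
  define w0 where "w0 = orth_proj S y0"
  define u0 where "u0 = y0 - orth_proj S y0"
  define y0' where "y0' = lam *\<^sub>R w0 + u0"
  have u0nz: "u0 \<noteq> 0" using Nz[OF y0] by (simp add: u0_def)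
  have y0'B: "y0' \<in> orthogonal_comp (range B)" using mapAB[OF y0(1)] by (simp add: y0'_def w0_def u0_def)
  have ny0': "norm y0' ^2 = lam^2 * norm w0 ^2 + norm u0 ^2" using ny'[of y0] by (simp add: y0'_def w0_def u0_def)
  have y0'nz: "y0' \<noteq> 0"
  proof
    assume "y0' = 0"
    then have "norm u0 ^2 = 0" using ny0' by (smt (verit) zero_le_power2 mult_nonneg_nonneg norm_zero zero_power2)
    then show False using u0nz by simp
  qed
  have y0'DB: "y0' \<in> DB" using y0'B y0'nz by (simp add: DB_def)
  have fy0': "f y0' = norm u0 / norm y0'" using fy'[of y0] by (simp add: y0'_def w0_def u0_def)
  have neDB: "DB \<noteq> {}" using y0'DB by blast
  have neDA: "DA \<noteq> {}" using y0 by (auto simp: DA_def)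
  define sB where "sB = (SUP y\<in>DB. f y)"
  have sBge: "f y0' \<le> sB" unfolding sB_def by (rule cSUP_upper[OF y0'DB bdf])
  have sB0: "0 \<le> sB" using sBge f01[of y0'] by linarith
  have LOW: "1 / (1 + lam\<^sup>2 * ((sin_subsp A S)\<^sup>2 / (cos_subsp A S)\<^sup>2)) \<le> sB^2"
  proof -
    have surj: "\<exists>a\<in>A. orth_proj S a = s" if "s \<in> S" for s using Qin PQ[OF that] by blast
    have dis': "A \<inter> orthogonal_comp S = {0}" using dis by (simp add: W_def)
    obtain c where c0: "c > 0" and c: "\<And>a. a \<in> A \<Longrightarrow> c * norm a \<le> norm (orth_proj S a)"
      using baire_part[OF cS cA surj dis'] by blast
    define sA' where "sA' = sin_subsp A S"
    define cA' where "cA' = cos_subsp A S"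
    have neA: "A - {0} \<noteq> {}" using assms(4) sA subspace_0 by blast
    have "c \<le> cA'" unfolding cA'_def cASdef
    proof (rule cINF_greatest[OF neA])
      fix a assume "a \<in> A - {0}"
      then have "c * norm a \<le> norm (orth_proj S a)" "norm a > 0" using c by auto
      then show "c \<le> g a" by (simp add: g_def pos_le_divide_eq)
    qed
    then have cpos: "cA' > 0" using c0 by linarith
    have TN: "norm (Q s - s) \<le> (sA' / cA') * norm s" if sS': "s \<in> S" for s
    proof (cases "s = 0")
      case True
      have "Q 0 = 0" using obl_eq[of 0 0] sA sW subspace_0 by auto
      then show ?thesis using True by simp
    next
      case False
      define a where "a = Q s"
      have aA: "a \<in> A" using Qin by (simp add: a_def)
      have Pa: "orth_proj S a = s" using PQ[OF sS'] by (simp add: a_def)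
      have anz: "a \<noteq> 0" using Pa False op_zero[OF cS] by auto
      have aD: "a \<in> A - {0}" using aA anz by simp
      have "f a \<le> sA'" unfolding sA'_def sASdef by (rule cSUP_upper[OF aD bdf])
      then have h1: "norm (Q s - s) \<le> sA' * norm a" using anz Pa by (simp add: f_def a_def divide_le_eq)
      have "cA' \<le> g a" unfolding cA'_def cASdef by (rule cINF_lower[OF bdg aD])
      then have h2: "cA' * norm a \<le> norm s" using anz Pa by (simp add: g_def le_divide_eq)
      have sA0: "0 \<le> sA'" using \<open>f a \<le> sA'\<close> f01[of a] by linarith
      have "sA' * norm a \<le> sA' * (norm s / cA')" using h2 cpos sA0
        by (intro mult_left_mono) (simp_all add: le_divide_eq mult.commute)
      then show ?thesis using h1 by (simp add: field_simps)
    qed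
    define N where "N = sA' / cA'"
    have N0: "0 \<le> N"
    proof -
      have "0 \<le> norm (Q w0 - w0)" by simp
      have "f y0 \<ge> 0" by (rule f01)
      have "sA' \<ge> 0"
      proof -
        obtain a where "a \<in> A - {0}" using neA by blast
        then have "f a \<le> sA'" unfolding sA'_def sASdef by (rule cSUP_upper[OF _ bdf])
        then show ?thesis using f01[of a] by linarith
      qed
      then show ?thesis using cpos by (simp add: N_def)
    qed
    have w0S: "w0 \<in> S" using PyS by (simp add: w0_def)
    have "G 1 w0 u0" using Aperp y0(1) by (simp add: w0_def u0_def)
    then have "inner w0 w0 + inner (Q w0 - w0) u0 = 0" using w0S by (simp add: G_def)
    then have "norm w0 ^2 = - inner (Q w0 - w0) u0" by (simp add: power2_norm_eq_inner)
    also have "\<dots> \<le> norm (Q w0 - w0) * norm u0"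
      using Cauchy_Schwarz_ineq2[of "Q w0 - w0" u0] by linarith
    also have "\<dots> \<le> N * norm w0 * norm u0"
      using mult_right_mono[OF TN[OF w0S], of "norm u0"] by (simp add: N_def)
    finally have hw: "norm w0 ^2 \<le> N * norm w0 * norm u0" .
    have hw2: "norm w0 \<le> N * norm u0"
    proof (cases "w0 = 0")
      case True then show ?thesis using N0 by simp
    next
      case False
      then have "norm w0 * norm w0 \<le> (N * norm u0) * norm w0" using hw by (simp add: power2_eq_square algebra_simps)
      then show ?thesis using False by simp
    qed
    then have hw3: "norm w0 ^2 \<le> N^2 * norm u0 ^2"
      by (metis norm_ge_zero power_mono power_mult_distrib)
    have nu: "norm u0 ^2 > 0" using u0nz by simp
    have "1 / (1 + lam^2 * N^2) = norm u0 ^2 / (norm u0 ^2 * (1 + lam^2 * N^2))"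
      using nu by simp
    also have "\<dots> \<le> norm u0 ^2 / (lam^2 * norm w0 ^2 + norm u0 ^2)"
    proof (rule divide_left_mono)
      show "lam^2 * norm w0 ^2 + norm u0 ^2 \<le> norm u0 ^2 * (1 + lam^2 * N^2)"
        using mult_left_mono[OF hw3, of "lam^2"] by (simp add: algebra_simps)
      show "0 \<le> norm u0 ^2" by simp
      show "0 < norm u0 ^2 * (1 + lam^2 * N^2) * (lam^2 * norm w0 ^2 + norm u0 ^2)"
      proof -
        have p1: "0 < 1 + lam^2 * N^2" by (simp add: add_pos_nonneg)
        have p2: "0 < lam^2 * norm w0 ^2 + norm u0 ^2" using nu by (simp add: add_nonneg_pos)
        show ?thesis using mult_pos_pos[OF mult_pos_pos[OF nu p1] p2] .
      qed
    qed
    also have "\<dots> = (f y0')^2" using fy0' ny0' by (simp add: power_divide)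
    also have "\<dots> \<le> sB^2" using sBge f01[of y0'] by (intro power_mono) auto
    finally have "1 / (1 + lam^2 * N^2) \<le> sB^2" .
    then show ?thesis by (simp add: N_def sA'_def cA'_def power_divide)
  qed
  define sP where "sP = sin_subsp (orthogonal_comp A) S"
  define cP where "cP = cos_subsp (orthogonal_comp A) S"
  define X where "X = sP^2"
  have sPpos: "sP > 0" using assms(8) by (simp add: sP_def)
  have Xpos: "X > 0" using sPpos by (simp add: X_def)
  have cPle: "cP \<le> g y" if "y \<in> DA" for y unfolding cP_def cPdef by (rule cINF_lower[OF bdg that])
  have cP0: "0 \<le> cP" unfolding cP_def cPdef by (rule cINF_greatest[OF neDA]) (simp add: g01)
  have fle: "f y \<le> sP" if "y \<in> DA" for y unfolding sP_def sPdef by (rule cSUP_upper[OF that bdf])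
  have cP1: "cP^2 \<le> 1 - X"
  proof -
    have "f y \<le> sqrt (1 - cP^2)" if "y \<in> DA" for y
    proof (rule real_le_rsqrt)
      have "cP^2 \<le> (g y)^2" using cPle[OF that] cP0 by (intro power_mono) auto
      moreover have "(f y)^2 + (g y)^2 = 1" using that fg by (simp add: DA_def)
      ultimately show "(f y)^2 \<le> 1 - cP^2" by linarith
    qed
    then have "sP \<le> sqrt (1 - cP^2)" unfolding sP_def sPdef by (intro cSUP_least[OF neDA]) auto
    moreover have "cP \<le> 1" using cPle[of y0] g01[of y0] y0 by (simp add: DA_def)
    ultimately have "sP^2 \<le> (sqrt (1 - cP^2))^2" using sPpos by (intro power_mono) auto
    also have "\<dots> = 1 - cP^2" using \<open>cP \<le> 1\<close> cP0 by (simp add: power_le_one)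
    finally show ?thesis by (simp add: X_def)
  qed
  define bnd where "bnd = X / (X + lam^2 * cP^2)"
  have bndpos: "0 < X + lam^2 * cP^2" using Xpos by (simp add: add_pos_nonneg)
  have fB: "(f y')^2 \<le> bnd" if "y' \<in> DB" for y'
  proof (cases "lam = 0")
    case True
    then have "bnd = 1" using Xpos by (simp add: bnd_def)
    then show ?thesis using f01[of y'] by (simp add: power_le_one)
  next
    case False
    then have lpos: "lam > 0" using assms(9) by simp
    define w' where "w' = orth_proj S y'"
    define u' where "u' = y' - orth_proj S y'"
    have w'S: "w' \<in> S" by (simp add: w'_def PyS)
    have u'W: "u' \<in> W" by (simp add: u'_def PW)
    have Gl: "G lam w' u'" using Bperp that by (simp add: DB_def w'_def u'_def)
    define y where "y = (1/lam) *\<^sub>R w' + u'"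
    have ywS: "(1/lam) *\<^sub>R w' \<in> S" using w'S sS by (simp add: subspace_scale)
    have Py: "orth_proj S y = (1/lam) *\<^sub>R w'" using dec[OF ywS u'W] by (simp add: y_def)
    have uy: "y - orth_proj S y = u'" using dec2[OF ywS u'W] by (simp add: y_def)
    have "G 1 ((1/lam) *\<^sub>R w') u'"
      unfolding G_def
    proof
      fix s assume "s \<in> S"
      then have "inner s w' + lam * inner (Q s - s) u' = 0" using Gl by (simp add: G_def)
      then have "(1/lam) * (inner s w' + lam * inner (Q s - s) u') = 0" by simp
      then show "inner s ((1/lam) *\<^sub>R w') + 1 * inner (Q s - s) u' = 0"
        using lpos by (simp add: algebra_simps)
    qed
    then have yA: "y \<in> orthogonal_comp A" using Aperp Py uy by simp
    have y'eq: "y' = w' + u'" by (simp add: w'_def u'_def)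
    have y'nz: "y' \<noteq> 0" using that by (simp add: DB_def)
    have ynz: "y \<noteq> 0"
    proof
      assume "y = 0"
      then have "(1/lam) *\<^sub>R w' = 0" "u' = 0" using Py uy op_zero[OF cS] by auto
      then have "w' = 0" "u' = 0" using lpos by auto
      then show False using y'nz y'eq by simp
    qed
    have "f y \<le> sP" using fle yA ynz by (simp add: DA_def)
    define a where "a = norm u' ^2"
    define b where "b = norm w' ^2"
    have a0: "0 \<le> a" and b0: "0 \<le> b" by (simp_all add: a_def b_def)
    have ny: "norm y ^2 = b / lam^2 + a"
    proof -
      have "inner ((1/lam) *\<^sub>R w') u' = 0" using SW0[OF ywS u'W] .
      from pyth2[OF this] show ?thesis
        by (simp add: y_def a_def b_def power_mult_distrib power_divide)
    qed
    have ny'2: "norm y' ^2 = b + a"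
    proof -
      have "inner w' u' = 0" using SW0[OF w'S u'W] .
      from pyth2[OF this] show ?thesis by (simp add: y'eq a_def b_def)
    qed
    have nyp: "norm y > 0" using ynz by simp
    have "norm u' \<le> sP * norm y" using \<open>f y \<le> sP\<close> nyp uy by (simp add: f_def divide_le_eq)
    then have "a \<le> (sP * norm y)^2" unfolding a_def by (intro power_mono) auto
    then have ha: "a \<le> X * (b / lam^2 + a)" by (simp add: X_def power_mult_distrib ny)
    then have "lam^2 * a \<le> X * b + lam^2 * X * a" using lpos by (simp add: field_simps)
    then have "lam^2 * a * (1 - X) \<le> X * b" by (simp add: algebra_simps)
    moreover have "lam^2 * a * cP^2 \<le> lam^2 * a * (1 - X)"
      using cP1 a0 by (intro mult_left_mono) auto
    ultimately have "lam^2 * a * cP^2 \<le> X * b" by linarith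
    then have key: "a * (X + lam^2 * cP^2) \<le> X * (b + a)" by (simp add: algebra_simps)
    have bapos: "b + a > 0" using ny'2 y'nz by (metis zero_less_norm_iff zero_less_power)
    have "(f y')^2 = a / (b + a)" using y'nz ny'2 by (simp add: f_def u'_def[symmetric] a_def power_divide)
    also have "\<dots> = (a * (X + lam^2 * cP^2)) / ((b + a) * (X + lam^2 * cP^2))"
      using bndpos by simp
    also have "\<dots> \<le> (X * (b + a)) / ((b + a) * (X + lam^2 * cP^2))"
      by (rule divide_right_mono[OF key]) (use bapos bndpos in simp)
    also have "\<dots> = bnd" unfolding bnd_def using bapos by simp
    finally show ?thesis .
  qed
  have "sB \<le> sqrt bnd" unfolding sB_def
    by (rule cSUP_least[OF neDB]) (rule real_le_rsqrt[OF fB])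
  then have "sB^2 \<le> (sqrt bnd)^2" using sB0 by (intro power_mono) auto
  also have "\<dots> = bnd" using Xpos bndpos by (simp add: bnd_def)
  finally have UP: "sB^2 \<le> bnd" .
  have bndeq: "bnd = 1 / (1 + lam\<^sup>2 * ((cos_subsp (orthogonal_comp A) S)\<^sup>2 / (sin_subsp (orthogonal_comp A) S)\<^sup>2))"
    using Xpos by (simp add: bnd_def X_def cP_def sP_def field_simps)
  show ?thesis using LOW UP bndeq by (simp add: sBdef sB_def)
qed

end
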